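(* Fix $q\in(0,1)$. Consider a sequence of problems indexed by $n\to\infty$ with dimension $p=p_n$ (possibly diverging with $n$). For each $n$, let $\widehat{W}_1,\ldots,\widehat{W}_p$ be real-valued random variables (the approximate knockoff statistics) and let $\mathcal{H}_0\subset\{1,\ldots,p\}$ be the (deterministic) set of null features. Define the threshold $$T_q \equiv \min\Big\{ t\in\{|\widehat W_1|,\ldots,|\widehat W_p|\} : \frac{\#\{j:\widehat W_j\le -t\}}{\#\{j:\widehat W_j\ge t\}\vee 1}\le q\Big\},$$ the selected set $\widehat{\mathcal S}\equiv\{j\in[p]:\widehat W_j\ge T_q\}$, and $$\mathrm{FDR}\equiv \mathbb E\Big[\frac{\#\{j: j\in\widehat{\mathcal S}\cap\mathcal H_0\}}{\#\{j:j\in\widehat{\mathcal S}\}\vee 1}\Big].$$ Assume that for some $\alpha_n>0$ the following hold: (1) (asymptotic approximate symmetry) $\displaystyle\sup_{t\in(0,\alpha_n)}\Big|\frac{\sum_{j\in\mathcal H_0}\mathbb P(\widehat W_j\ge t)}{\sum_{j\in\mathcal H_0}\mathbb P(\widehat W_j\le -t)}-1\Big| = o(1)$; (2) (approximation for indicator functions) $$\sup_{t\in(0,\alpha_n)}\Big\{\Big|\frac{\sum_{j\in\mathcal H_0}\mathbf 1\{\widehat W_j\ge t\}}{\sum_{j\in\mathcal H_0}\mathbb P(\widehat W_j\ge t)}-1\Big|\vee\Big|\frac{\sum_{j\in\mathcal H_0}\mathbf 1\{\widehat W_j\le -t\}}{\sum_{j\in\mathcal H_0}\mathbb P(\widehat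 W_j\le -t)}-1\Big|\Big\}=o_{\mathbb P}(1);$$ (3) (localization of $T_q$) $\mathbb P(T_q>\alpha_n)=o(1)$. Then $\limsup_{n\to\infty}\mathrm{FDR}\le q$.
   Context: All asymptotic statements are as $n\to\infty$ with $p$ allowed to diverge with $n$; $a_n=o(b_n)$ means $a_n/b_n\to0$ and $a_n=o_{\mathbb P}(b_n)$ means $a_n/b_n\to0$ in probability. $a\vee b=\max\{a,b\}$. *)

theory Defs
  imports "HOL-Probability.Probability"
begin

text \<open>Knockoff threshold T_q (features indexed by 1..p). The minimum over an empty
  candidate set is taken to be +infinity (no feature is then selected).\<close>
definition Tq :: "real \<Rightarrow> nat \<Rightarrow> (nat \<Rightarrow> 'a \<Rightarrow> real) \<Rightarrow> 'a \<Rightarrow> ereal" where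
  "Tq q p W \<omega> =
     (let C = {t. t \<in> (\<lambda>j. \<bar>W j \<omega>\<bar>) ` {1..p} \<and>
                  real (card {j\<in>{1..p}. W j \<omega> \<le> - t})
                    / max (real (card {j\<in>{1..p}. W j \<omega> \<ge> t})) 1 \<le> q}
      in if C = {} then \<infinity> else ereal (Min C))"

definition selected :: "real \<Rightarrow> nat \<Rightarrow> (nat \<Rightarrow> 'a \<Rightarrow> real) \<Rightarrow> 'a \<Rightarrow> nat set" where
  "selected q p W \<omega> = {j\<in>{1..p}. ereal (W j \<omega>) \<ge> Tq q p W \<omega>}"

definition FDP :: "real \<Rightarrow> nat \<Rightarrow> nat set \<Rightarrow> (nat \<Rightarrow> 'a \<Rightarrow> real) \<Rightarrow> 'a \<Rightarrow> real" where
  "FDP q p H0 W \<omega> =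
     real (card (selected q p W \<omega> \<inter> H0)) / max (real (card (selected q p W \<omega>))) 1"

definition FDR :: "'a measure \<Rightarrow> real \<Rightarrow> nat \<Rightarrow> nat set \<Rightarrow> (nat \<Rightarrow> 'a \<Rightarrow> real) \<Rightarrow> real" where
  "FDR M q p H0 W = integral\<^sup>L M (FDP q p H0 W)"

end

theory Submission imports Defs begin

lemma exists_t:
  fixes V :: "real set"
  assumes "finite V" "0 \<le> T" "T \<le> a" "0 < a"
  shows "\<exists>t. 0 < t \<and> t < a \<and> (\<forall>v\<in>V. 0 \<le> v \<longrightarrow> (t \<le> v \<longleftrightarrow> T \<le> v \<and> v \<noteq> 0))"
proof (cases "T > 0")
  case True
  define L where "L = {v\<in>V. v < T} \<union> {0}"
  have fin: "finite L" "L \<noteq> {}" using assms(1) by (auto simp: L_def)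
  define m where "m = Max L"
  have mT: "m < T" unfolding m_def using fin True by (subst Max_less_iff) (auto simp: L_def)
  have m0: "0 \<le> m" unfolding m_def using fin by (intro Max_ge) (auto simp: L_def)
  have vm: "v \<le> m" if "v \<in> V" "v < T" for v unfolding m_def using fin that by (intro Max_ge) (auto simp: L_def)
  show ?thesis
  proof (intro exI[of _ "(m+T)/2"] conjI ballI impI)
    fix v assume v: "v \<in> V" "0 \<le> v"
    show "((m + T) / 2 \<le> v) = (T \<le> v \<and> v \<noteq> 0)"
    proof (cases "v < T")
      case True then show ?thesis using vm[OF v(1) True] mT by auto
    next
      case False then show ?thesis using mT \<open>T > 0\<close> by auto
    qed
  qed (use mT m0 assms True in auto)
next
  case False
  hence T0: "T = 0" using assms by auto
  define L where "L = {v\<in>V. v > 0} \<union> {a}"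
  have fin: "finite L" "L \<noteq> {}" using assms(1) by (auto simp: L_def)
  define m where "m = Min L"
  have m0: "0 < m" unfolding m_def using fin assms by (subst Min_gr_iff) (auto simp: L_def)
  have ma: "m \<le> a" unfolding m_def using fin by (intro Min_le) (auto simp: L_def)
  have vm: "m \<le> v" if "v \<in> V" "v > 0" for v unfolding m_def using fin that by (intro Min_le) (auto simp: L_def)
  show ?thesis
  proof (intro exI[of _ "m/2"] conjI ballI impI)
    fix v assume v: "v \<in> V" "0 \<le> v"
    show "(m / 2 \<le> v) = (T \<le> v \<and> v \<noteq> 0)"
    proof (cases "v = 0")
      case True then show ?thesis using m0 by auto
    next
      case False then show ?thesis using vm[OF v(1)] v m0 T0 by auto
    qed
  qed (use m0 ma in auto)
qed

lemma ratio_bound: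
  fixes x Sp Sm y e :: real
  assumes "0 < e" "e < 1" "0 \<le> x" "0 \<le> y" "0 \<le> Sp" "0 \<le> Sm"
    "\<bar>x / Sp - 1\<bar> \<le> e" "\<bar>Sp / Sm - 1\<bar> \<le> e" "\<bar>y / Sm - 1\<bar> \<le> e"
  shows "x \<le> ((1+e)^2/(1-e)) * y"
proof -
  have "Sp \<noteq> 0" using assms(2,7) by auto
  hence Sp: "Sp > 0" using assms by auto
  have "Sm \<noteq> 0" using assms(2,8) by auto
  hence Sm: "Sm > 0" using assms by auto
  have 1: "x \<le> (1+e) * Sp" using assms(7) Sp by (auto simp: abs_le_iff field_simps)
  have 2: "Sp \<le> (1+e) * Sm" using assms(8) Sm by (auto simp: abs_le_iff field_simps)
  have 3: "(1-e) * Sm \<le> y" using assms(9) Sm by (auto simp: abs_le_iff field_simps)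
  have "x \<le> (1+e)^2 * Sm" using 1 2 assms
    by (smt (verit) mult_left_mono power2_eq_square mult.assoc)
  also have "\<dots> \<le> (1+e)^2 * (y / (1-e))" using 3 assms
    by (intro mult_left_mono) (auto simp: field_simps)
  finally show ?thesis by simp
qed


lemma Tq_gt:
  "Tq q p W \<omega> > ereal a \<longleftrightarrow> (\<forall>j\<in>{1..p}. \<bar>W j \<omega>\<bar> \<le> a \<longrightarrow>
     \<not> (real (card {i\<in>{1..p}. W i \<omega> \<le> - \<bar>W j \<omega>\<bar>})
        / max (real (card {i\<in>{1..p}. W i \<omega> \<ge> \<bar>W j \<omega>\<bar>})) 1 \<le> q))"
  (is "?L \<longleftrightarrow> ?R")
proof -
  define C where "C = {t. t \<in> (\<lambda>j. \<bar>W j \<omega>\<bar>) ` {1..p} \<and>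
                  real (card {j\<in>{1..p}. W j \<omega> \<le> - t})
                    / max (real (card {j\<in>{1..p}. W j \<omega> \<ge> t})) 1 \<le> q}"
  have finC: "finite C" unfolding C_def by (rule finite_subset[of _ "(\<lambda>j. \<bar>W j \<omega>\<bar>) ` {1..p}"]) auto
  have T: "Tq q p W \<omega> = (if C = {} then \<infinity> else ereal (Min C))"
    unfolding Tq_def C_def Let_def by simp
  have "Tq q p W \<omega> > ereal a \<longleftrightarrow> (\<forall>t\<in>C. t > a)"
    using finC by (auto simp: T Min_gr_iff)
  also have "\<dots> \<longleftrightarrow> ?R" unfolding C_def by (auto simp: not_le)
  finally show ?thesis .
qed

lemma FDP_bound:
  fixes W :: "nat \<Rightarrow> 'a \<Rightarrow> real"
  assumes H: "H \<subseteq> {1..p}" and a: "0 < a" and c: "1 \<le> c"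
    and hyp: "\<And>t. 0 < t \<Longrightarrow> t < a \<Longrightarrow>
       real (card {j\<in>H. W j \<omega> \<ge> t}) \<le> c * real (card {j\<in>H. W j \<omega> \<le> - t})"
    and Tle: "Tq q p W \<omega> \<le> ereal a"
  shows "FDP q p H W \<omega> \<le> c * q"
proof -
  define C where "C = {t. t \<in> (\<lambda>j. \<bar>W j \<omega>\<bar>) ` {1..p} \<and>
                  real (card {j\<in>{1..p}. W j \<omega> \<le> - t})
                    / max (real (card {j\<in>{1..p}. W j \<omega> \<ge> t})) 1 \<le> q}"
  have finC: "finite C" unfolding C_def by (rule finite_subset[of _ "(\<lambda>j. \<bar>W j \<omega>\<bar>) ` {1..p}"]) auto
  have T: "Tq q p W \<omega> = (if C = {} then \<infinity> else ereal (Min C))"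
    unfolding Tq_def C_def Let_def by simp
  have Cne: "C \<noteq> {}" using Tle T by (cases "C = {}") auto
  define T0 where "T0 = Min C"
  have T0C: "T0 \<in> C" using finC Cne T0_def by auto
  have TqT: "Tq q p W \<omega> = ereal T0" using T Cne T0_def by simp
  have T0a: "T0 \<le> a" using Tle TqT by simp
  have T00: "0 \<le> T0" using T0C unfolding C_def by auto
  define Nm where "Nm = card {j\<in>{1..p}. W j \<omega> \<le> - T0}"
  define Np where "Np = card {j\<in>{1..p}. W j \<omega> \<ge> T0}"
  have cond: "real Nm / max (real Np) 1 \<le> q" using T0C unfolding C_def Nm_def Np_def by auto
  have sel: "selected q p W \<omega> = {j\<in>{1..p}. W j \<omega> \<ge> T0}"
    unfolding selected_def TqT by simp
  obtain t where t: "0 < t" "t < a"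
    and tv: "\<forall>v\<in>(\<lambda>j. \<bar>W j \<omega>\<bar>) ` {1..p}. 0 \<le> v \<longrightarrow> (t \<le> v \<longleftrightarrow> T0 \<le> v \<and> v \<noteq> 0)"
    using exists_t[of "(\<lambda>j. \<bar>W j \<omega>\<bar>) ` {1..p}" T0 a] T00 T0a a by auto
  have tj: "(t \<le> W j \<omega> \<longleftrightarrow> T0 \<le> W j \<omega> \<and> W j \<omega> \<noteq> 0) \<and>
            (W j \<omega> \<le> - t \<longleftrightarrow> W j \<omega> \<le> - T0 \<and> W j \<omega> \<noteq> 0)" if "j \<in> {1..p}" for j
  proof -
    have "t \<le> \<bar>W j \<omega>\<bar> \<longleftrightarrow> T0 \<le> \<bar>W j \<omega>\<bar> \<and> \<bar>W j \<omega>\<bar> \<noteq> 0" using tv that by auto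
    then show ?thesis using t T00 by (cases "W j \<omega> \<ge> 0") auto
  qed
  define A where "A = {j\<in>H. W j \<omega> \<ge> t}"
  define B where "B = {j\<in>H. W j \<omega> \<le> - t}"
  define Z where "Z = {j\<in>H. W j \<omega> = 0 \<and> W j \<omega> \<le> - T0}"
  have finH: "finite H" using H finite_subset by blast
  have "{j\<in>H. W j \<omega> \<ge> T0} \<subseteq> A \<union> Z" using tj H T00 unfolding A_def Z_def by force
  hence "card {j\<in>H. W j \<omega> \<ge> T0} \<le> card (A \<union> Z)" by (intro card_mono) (auto simp: A_def Z_def finH)
  also have "\<dots> \<le> card A + card Z" by (rule card_Un_le)
  finally have 1: "real (card {j\<in>H. W j \<omega> \<ge> T0}) \<le> real (card A) + real (card Z)" by linarith
  have 2: "real (card A) \<le> c * real (card B)" using hyp[OF t] unfolding A_def B_def .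
  have disj: "B \<inter> Z = {}" using t unfolding B_def Z_def by auto
  have "card B + card Z = card (B \<union> Z)" using disj finH by (intro card_Un_disjoint[symmetric]) (auto simp: B_def Z_def)
  also have "\<dots> \<le> Nm" unfolding Nm_def using tj H by (intro card_mono) (auto simp: B_def Z_def)
  finally have 3: "real (card B) + real (card Z) \<le> real Nm" by linarith
  have selH: "selected q p W \<omega> \<inter> H = {j\<in>H. W j \<omega> \<ge> T0}" using sel H by auto
  have num: "real (card (selected q p W \<omega> \<inter> H)) \<le> c * real Nm"
  proof -
    have z: "real (card Z) \<le> c * real (card Z)" using c mult_right_mono[of 1 c "real (card Z)"] by simp
    have "c * (real (card B) + real (card Z)) \<le> c * real Nm" using 3 c by (intro mult_left_mono) auto
    then show ?thesis using 1 2 z selH by (simp add: algebra_simps)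
  qed
  have "FDP q p H W \<omega> = real (card (selected q p W \<omega> \<inter> H)) / max (real Np) 1"
    unfolding FDP_def sel Np_def by simp
  also have "\<dots> \<le> c * real Nm / max (real Np) 1" using num by (intro divide_right_mono) auto
  also have "\<dots> = c * (real Nm / max (real Np) 1)" by simp
  also have "\<dots> \<le> c * q" using cond c by (intro mult_left_mono) auto
  finally show ?thesis .
qed


lemma card_sum: "finite I \<Longrightarrow> real (card {i\<in>I. Q i}) = (\<Sum>i\<in>I. if Q i then 1 else 0)"
  by (simp add: sum.If_cases Int_def conj_commute)

lemma B_sets:
  fixes W :: "nat \<Rightarrow> 'a \<Rightarrow> real"
  assumes meas: "\<And>j. j \<in> {1..p} \<Longrightarrow> W j \<in> borel_measurable M"
  shows "{\<omega>\<in>space M. Tq q p W \<omega> > ereal a} \<in> sets M"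
proof -
  have eq: "{\<omega>\<in>space M. Tq q p W \<omega> > ereal a} = {\<omega>\<in>space M. \<forall>j\<in>{1..p}. \<bar>W j \<omega>\<bar> \<le> a \<longrightarrow>
     \<not> ((\<Sum>i\<in>{1..p}. if W i \<omega> \<le> - \<bar>W j \<omega>\<bar> then 1 else 0)
        / max (\<Sum>i\<in>{1..p}. if W i \<omega> \<ge> \<bar>W j \<omega>\<bar> then 1 else 0) 1 \<le> q)}"
    by (simp only: Tq_gt card_sum[OF finite_atLeastAtMost])
  show ?thesis unfolding eq
  proof (rule sets.sets_Collect_finite_All)
    fix j assume j: "j \<in> {1..p}"
    have [measurable]: "W j \<in> borel_measurable M" using meas j .
    have f1[measurable]: "(\<lambda>\<omega>. \<Sum>i\<in>{1..p}. if W i \<omega> \<le> - \<bar>W j \<omega>\<bar> then 1 else (0::real)) \<in> borel_measurable M"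
    proof (rule borel_measurable_sum)
      fix i assume i: "i \<in> {1..p}"
      have [measurable]: "W i \<in> borel_measurable M" using meas i .
      show "(\<lambda>\<omega>. if W i \<omega> \<le> - \<bar>W j \<omega>\<bar> then 1 else (0::real)) \<in> borel_measurable M" by measurable
    qed
    have f2[measurable]: "(\<lambda>\<omega>. \<Sum>i\<in>{1..p}. if W i \<omega> \<ge> \<bar>W j \<omega>\<bar> then 1 else (0::real)) \<in> borel_measurable M"
    proof (rule borel_measurable_sum)
      fix i assume i: "i \<in> {1..p}"
      have [measurable]: "W i \<in> borel_measurable M" using meas i .
      show "(\<lambda>\<omega>. if W i \<omega> \<ge> \<bar>W j \<omega>\<bar> then 1 else (0::real)) \<in> borel_measurable M" by measurable
    qed
    show "{\<omega>\<in>space M. \<bar>W j \<omega>\<bar> \<le> a \<longrightarrow>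
     \<not> ((\<Sum>i\<in>{1..p}. if W i \<omega> \<le> - \<bar>W j \<omega>\<bar> then 1 else 0)
        / max (\<Sum>i\<in>{1..p}. if W i \<omega> \<ge> \<bar>W j \<omega>\<bar> then 1 else 0) 1 \<le> q)} \<in> sets M"
      by measurable
  qed simp
qed

lemma FDP_01:
  assumes "H \<subseteq> {1..p}"
  shows "0 \<le> FDP q p H W \<omega>" "FDP q p H W \<omega> \<le> 1"
proof -
  have fin: "finite (selected q p W \<omega>)" unfolding selected_def by simp
  have "card (selected q p W \<omega> \<inter> H) \<le> card (selected q p W \<omega>)" using fin by (intro card_mono) auto
  hence le: "real (card (selected q p W \<omega> \<inter> H)) \<le> max (real (card (selected q p W \<omega>))) 1" by linarith
  have pos: "0 < max (real (card (selected q p W \<omega>))) 1" by simp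
  show "FDP q p H W \<omega> \<le> 1" unfolding FDP_def using le pos by (simp add: divide_le_eq_1)
  show "0 \<le> FDP q p H W \<omega>" unfolding FDP_def by simp
qed

lemma c_bound: "0 < (e::real) \<Longrightarrow> e \<le> 1/2 \<Longrightarrow> (1+e)^2/(1-e) \<le> 1 + 8*e"
  by (simp add: field_simps power2_eq_square)

theorem theorem1:
  fixes M :: "nat \<Rightarrow> 'a measure" and p :: "nat \<Rightarrow> nat"
    and W :: "nat \<Rightarrow> nat \<Rightarrow> 'a \<Rightarrow> real" and H0 :: "nat \<Rightarrow> nat set"
    and alpha :: "nat \<Rightarrow> real" and q :: real
  assumes q: "0 < q" "q < 1"
    and prob: "\<And>n. prob_space (M n)"
    and meas: "\<And>n j. j \<in> {1..p n} \<Longrightarrow> W n j \<in> borel_measurable (M n)"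
    and H0: "\<And>n. H0 n \<subseteq> {1..p n}"
    and alpha: "\<And>n. alpha n > 0"
    and sym: "\<And>\<epsilon>. \<epsilon> > 0 \<Longrightarrow> eventually (\<lambda>n. \<forall>t\<in>{0<..<alpha n}.
              \<bar>(\<Sum>j\<in>H0 n. measure (M n) {\<omega>\<in>space (M n). W n j \<omega> \<ge> t})
               / (\<Sum>j\<in>H0 n. measure (M n) {\<omega>\<in>space (M n). W n j \<omega> \<le> - t}) - 1\<bar> \<le> \<epsilon>)
              sequentially"
    and approx: "\<And>\<epsilon>. \<epsilon> > 0 \<Longrightarrow> \<exists>A. (\<forall>n. A n \<in> sets (M n)) \<and>
              (\<forall>n. {\<omega>\<in>space (M n). \<exists>t\<in>{0<..<alpha n}.
                 \<bar>real (card {j\<in>H0 n. W n j \<omega> \<ge> t})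
                   / (\<Sum>j\<in>H0 n. measure (M n) {\<omega>'\<in>space (M n). W n j \<omega>' \<ge> t}) - 1\<bar> > \<epsilon> \<or>
                 \<bar>real (card {j\<in>H0 n. W n j \<omega> \<le> - t})
                   / (\<Sum>j\<in>H0 n. measure (M n) {\<omega>'\<in>space (M n). W n j \<omega>' \<le> - t}) - 1\<bar> > \<epsilon>}
                 \<subseteq> A n) \<and>
              (\<lambda>n. measure (M n) (A n)) \<longlonglongrightarrow> 0"
    and local: "(\<lambda>n. measure (M n) {\<omega>\<in>space (M n). Tq q (p n) (W n) \<omega> > ereal (alpha n)})
              \<longlonglongrightarrow> 0"
  shows "limsup (\<lambda>n. ereal (FDR (M n) q (p n) (H0 n) (W n))) \<le> ereal q"
proof -
  define c where "c e = (1+e)^2/(1-e)" for e :: real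
  have key: "limsup (\<lambda>n. ereal (FDR (M n) q (p n) (H0 n) (W n))) \<le> ereal (c e * q)"
    if e: "0 < e" "e < 1" for e
  proof -
    have c1: "1 \<le> c e" unfolding c_def using e by (simp add: field_simps power2_eq_square)
    have cq0: "0 \<le> c e * q" using c1 q by simp
    obtain A where Asets: "\<And>n. A n \<in> sets (M n)"
      and Asub: "\<And>n. {\<omega>\<in>space (M n). \<exists>t\<in>{0<..<alpha n}.
                 \<bar>real (card {j\<in>H0 n. W n j \<omega> \<ge> t})
                   / (\<Sum>j\<in>H0 n. measure (M n) {\<omega>'\<in>space (M n). W n j \<omega>' \<ge> t}) - 1\<bar> > e \<or>
                 \<bar>real (card {j\<in>H0 n. W n j \<omega> \<le> - t})
                   / (\<Sum>j\<in>H0 n. measure (M n) {\<omega>'\<in>space (M n). W n j \<omega>' \<le> - t}) - 1\<bar> > e}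
                 \<subseteq> A n"
      and Alim: "(\<lambda>n. measure (M n) (A n)) \<longlonglongrightarrow> 0"
      using approx[OF e(1)] by blast
    define B where "B n = {\<omega>\<in>space (M n). Tq q (p n) (W n) \<omega> > ereal (alpha n)}" for n
    have Bsets: "B n \<in> sets (M n)" for n unfolding B_def by (rule B_sets) (rule meas)
    obtain N where N: "\<And>n t. n \<ge> N \<Longrightarrow> t \<in> {0<..<alpha n} \<Longrightarrow>
              \<bar>(\<Sum>j\<in>H0 n. measure (M n) {\<omega>\<in>space (M n). W n j \<omega> \<ge> t})
               / (\<Sum>j\<in>H0 n. measure (M n) {\<omega>\<in>space (M n). W n j \<omega> \<le> - t}) - 1\<bar> \<le> e"
      using sym[OF e(1)] unfolding eventually_sequentially by blast
    have bound: "FDR (M n) q (p n) (H0 n) (W n) \<le> c e * q + (measure (M n) (A n) + measure (M n) (B n))"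
      if n: "n \<ge> N" for n
    proof -
      interpret P: prob_space "M n" by (rule prob)
      define FD where "FD = FDP q (p n) (H0 n) (W n)"
      have pw: "FD \<omega> \<le> c e * q + indicator (A n \<union> B n) \<omega>" if om: "\<omega> \<in> space (M n)" for \<omega>
      proof (cases "\<omega> \<in> A n \<union> B n")
        case True
        then show ?thesis using FDP_01(2)[where H="H0 n" and p="p n" and q=q and W="W n" and \<omega>=\<omega>, OF H0] cq0 unfolding FD_def by simp
      next
        case False
        have Tle: "Tq q (p n) (W n) \<omega> \<le> ereal (alpha n)" using False om unfolding B_def by auto
        have hyp: "real (card {j\<in>H0 n. W n j \<omega> \<ge> t}) \<le> c e * real (card {j\<in>H0 n. W n j \<omega> \<le> - t})"
          if t: "0 < t" "t < alpha n" for t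
        proof -
          have t': "t \<in> {0<..<alpha n}" using t by simp
          have nA: "\<omega> \<notin> A n" using False by simp
          have ap: "\<bar>real (card {j\<in>H0 n. W n j \<omega> \<ge> t})
                   / (\<Sum>j\<in>H0 n. measure (M n) {\<omega>'\<in>space (M n). W n j \<omega>' \<ge> t}) - 1\<bar> \<le> e \<and>
                 \<bar>real (card {j\<in>H0 n. W n j \<omega> \<le> - t})
                   / (\<Sum>j\<in>H0 n. measure (M n) {\<omega>'\<in>space (M n). W n j \<omega>' \<le> - t}) - 1\<bar> \<le> e"
          proof -
            have "\<not> (\<bar>real (card {j\<in>H0 n. W n j \<omega> \<ge> t})
                   / (\<Sum>j\<in>H0 n. measure (M n) {\<omega>'\<in>space (M n). W n j \<omega>' \<ge> t}) - 1\<bar> > e \<or>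
                 \<bar>real (card {j\<in>H0 n. W n j \<omega> \<le> - t})
                   / (\<Sum>j\<in>H0 n. measure (M n) {\<omega>'\<in>space (M n). W n j \<omega>' \<le> - t}) - 1\<bar> > e)"
              using Asub[of n] nA om t' by blast
            then show ?thesis by (simp only: not_less de_Morgan_disj)
          qed
          show ?thesis unfolding c_def
            by (rule ratio_bound[OF e _ _ _ _ conjunct1[OF ap] N[OF n t'] conjunct2[OF ap]])
               (auto intro!: sum_nonneg)
        qed
        have "FD \<omega> \<le> c e * q" unfolding FD_def
          by (rule FDP_bound[OF H0 alpha c1 hyp Tle])
        then show ?thesis using False by (simp add: indicator_def)
      qed
      have ABsets: "A n \<union> B n \<in> sets (M n)" using Asets Bsets by auto
      have intg: "integrable (M n) (\<lambda>\<omega>. c e * q + indicator (A n \<union> B n) \<omega>)"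
        using ABsets by (intro Bochner_Integration.integrable_add P.integrable_const integrable_real_indicator)
          (auto simp: P.emeasure_eq_measure)
      show ?thesis
      proof (cases "integrable (M n) FD")
        case True
        have "FDR (M n) q (p n) (H0 n) (W n) = integral\<^sup>L (M n) FD" unfolding FDR_def FD_def ..
        also have "\<dots> \<le> integral\<^sup>L (M n) (\<lambda>\<omega>. c e * q + indicator (A n \<union> B n) \<omega>)"
          using True intg pw by (intro integral_mono) auto
        also have "\<dots> = c e * q + measure (M n) (A n \<union> B n)"
          using ABsets sets.sets_into_space[OF ABsets] by (subst Bochner_Integration.integral_add) (auto simp: P.prob_space Int_absorb2 P.emeasure_eq_measure)
        also have "\<dots> \<le> c e * q + (measure (M n) (A n) + measure (M n) (B n))"
          using measure_Un_le[OF Asets Bsets] by simp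
        finally show ?thesis .
      next
        case False
        hence "FDR (M n) q (p n) (H0 n) (W n) = 0" unfolding FDR_def FD_def
          by (simp add: not_integrable_integral_eq)
        then show ?thesis using c1 q by (simp add: add_nonneg_nonneg)
      qed
    qed
    have ev: "eventually (\<lambda>n. ereal (FDR (M n) q (p n) (H0 n) (W n)) \<le>
              ereal (c e * q + (measure (M n) (A n) + measure (M n) (B n)))) sequentially"
      using bound unfolding eventually_sequentially by auto
    have lim: "(\<lambda>n. ereal (c e * q + (measure (M n) (A n) + measure (M n) (B n)))) \<longlonglongrightarrow> ereal (c e * q)"
    proof -
      have "(\<lambda>n. c e * q + (measure (M n) (A n) + measure (M n) (B n))) \<longlonglongrightarrow> c e * q + (0 + 0)"
        using Alim local unfolding B_def by (intro tendsto_intros)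
      then show ?thesis by (intro tendsto_ereal) simp
    qed
    have "limsup (\<lambda>n. ereal (FDR (M n) q (p n) (H0 n) (W n))) \<le>
          limsup (\<lambda>n. ereal (c e * q + (measure (M n) (A n) + measure (M n) (B n))))"
      by (rule Limsup_mono[OF ev])
    also have "\<dots> = ereal (c e * q)" by (rule lim_imp_Limsup[OF _ lim]) simp
    finally show ?thesis .
  qed
  show ?thesis
  proof (rule ereal_le_epsilon2)
    fix d :: real assume d: "0 < d"
    define e where "e = min (1/2) (d / (8*q))"
    have e: "0 < e" "e \<le> 1/2" "e \<le> d / (8*q)" using d q unfolding e_def by auto
    have "c e * q \<le> (1 + 8*e) * q" unfolding c_def using c_bound[OF e(1,2)] q by (intro mult_right_mono) auto
    also have "\<dots> \<le> q + d" using e(3) q by (simp add: field_simps)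
    finally have "c e * q \<le> q + d" .
    then show "limsup (\<lambda>n. ereal (FDR (M n) q (p n) (H0 n) (W n))) \<le> ereal q + ereal d"
    proof -
      have "limsup (\<lambda>n. ereal (FDR (M n) q (p n) (H0 n) (W n))) \<le> ereal (c e * q)"
        using key[of e] e by simp
      also have "\<dots> \<le> ereal (q + d)" using \<open>c e * q \<le> q + d\<close> by simp
      finally show ?thesis by simp
    qed
  qed
qed

end
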